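(* Let $S$ be an additively reduced and additively Furstenberg semidomain and let $G$ be a torsion-free abelian group, totally ordered compatibly with addition, in which every subset that is bounded below is well-ordered. The following statements are equivalent. (1) $\mathscr{A}_+(S)=S^\times$. (2) Every $f\in S[\![G]\!]$ with $|\operatorname{supp}(f)|>1$ can be expressed as the sum of at most three irreducible elements of $S[\![G]\!]$. (3) There exists $n\in\mathbb{N}$ with $n>2$ such that every $f\in S[\![G]\!]$ with $|\operatorname{supp}(f)|>1$ can be expressed as the sum of at most $n$ irreducible elements of $S[\![G]\!]$.
   Context: A semidomain is a subsemiring (containing $0$ and $1$) of an integral domain; all semirings are commutative. For a semidomain $S$, $S^\times$ denotes the group of units of the multiplicative monoid $S\setminus\{0\}$. $S$ is additively reduced if $0$ is the only invertible element of $(S,+)$. An additive atom of $S$ is a nonzero $a\in S$ such that $a=b+c$ with $b,c\in S$ implies $b=0$ or $c=0$; $\mathscr{A}_+(S)$ is the set of additive atoms. $S$ is additively Furstenberg if every nonzero $s\in S$ can be written $s=a+t$ with $a\in\mathscr{A}_+(S)$, $t\in S$. For a torsion-free abelian group $G$ with a fixed total order compatible with addition, the group series semidomain is $S[\![G]\!]=\{\sum_{i=0}^\infty s_ix^{g_i} : s_i\in S,\ g_i\in G,\ g_i<g_{i+1}\text{ for all } i\}$, with addition and multiplication defined as for (formal) polynomials; elements are written with the convention that $s_i=0$ implies $s_{i+1}=0$. The support of $f=\sum s_ix^{g_i}$ is $\operatorname{supp}(f)=\{g_i : s_i\neq0\}$. An element $f$ is irreducible if it is nonzero, not a unit of $S[\![G]\!]$,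 and $f=pq$ with $p,q\in S[\![G]\!]$ implies one of $p,q$ is a unit. *)

theory Defs
  imports Main
begin

definition semidomain :: "'r::idom set \<Rightarrow> bool" where
  "semidomain S \<longleftrightarrow> 0 \<in> S \<and> 1 \<in> S \<and>
     (\<forall>a\<in>S. \<forall>b\<in>S. a + b \<in> S) \<and> (\<forall>a\<in>S. \<forall>b\<in>S. a * b \<in> S)"

definition sunits :: "'r::idom set \<Rightarrow> 'r set" where
  "sunits S = {u \<in> S. u \<noteq> 0 \<and> (\<exists>v\<in>S. v \<noteq> 0 \<and> u * v = 1)}"

definition additively_reduced :: "'r::idom set \<Rightarrow> bool" where
  "additively_reduced S \<longleftrightarrow> (\<forall>a\<in>S. (\<exists>b\<in>S. a + b = 0) \<longrightarrow> a = 0)"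

definition add_atoms :: "'r::idom set \<Rightarrow> 'r set" where
  "add_atoms S = {a \<in> S. a \<noteq> 0 \<and> (\<forall>b\<in>S. \<forall>c\<in>S. a = b + c \<longrightarrow> b = 0 \<or> c = 0)}"

definition additively_furstenberg :: "'r::idom set \<Rightarrow> bool" where
  "additively_furstenberg S \<longleftrightarrow>
     (\<forall>s\<in>S. s \<noteq> 0 \<longrightarrow> (\<exists>a\<in>add_atoms S. \<exists>t\<in>S. s = a + t))"

text \<open>Elements
  sum_i s_i x^(g_i) with strictly increasing g_i are exactly the functions with
  coefficients in S whose support has every element preceded by only finitely many
  support elements (support of order type at most omega).\<close>

definition supp :: "('g \<Rightarrow> 'r::zero) \<Rightarrow> 'g set" where
  "supp f = {g. f g \<noteq> 0}"

definition series :: "'r::idom set \<Rightarrow> ('g::linordered_ab_group_add \<Rightarrow> 'r) set" where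
  "series S = {f. (\<forall>g. f g \<in> S) \<and> (\<forall>g\<in>supp f. finite {h \<in> supp f. h < g})}"

definition series_one :: "'g::linordered_ab_group_add \<Rightarrow> 'r::idom" where
  "series_one = (\<lambda>k. if k = 0 then 1 else 0)"

definition series_mult ::
  "('g::linordered_ab_group_add \<Rightarrow> 'r::idom) \<Rightarrow> ('g \<Rightarrow> 'r) \<Rightarrow> ('g \<Rightarrow> 'r)" where
  "series_mult f h = (\<lambda>k. \<Sum>a\<in>{a. f a \<noteq> 0 \<and> h (k - a) \<noteq> 0}. f a * h (k - a))"

definition series_unit :: "'r::idom set \<Rightarrow> ('g::linordered_ab_group_add \<Rightarrow> 'r) \<Rightarrow> bool" where
  "series_unit S f \<longleftrightarrow> f \<in> series S \<and> (\<exists>q\<in>series S. series_mult f q = series_one)"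

definition series_irreducible ::
  "'r::idom set \<Rightarrow> ('g::linordered_ab_group_add \<Rightarrow> 'r) \<Rightarrow> bool" where
  "series_irreducible S f \<longleftrightarrow> f \<in> series S \<and> f \<noteq> (\<lambda>_. 0) \<and> \<not> series_unit S f \<and>
     (\<forall>p\<in>series S. \<forall>q\<in>series S. f = series_mult p q \<longrightarrow> series_unit S p \<or> series_unit S q)"

definition sum_at_most_irreducibles ::
  "'r::idom set \<Rightarrow> nat \<Rightarrow> ('g::linordered_ab_group_add \<Rightarrow> 'r) \<Rightarrow> bool" where
  "sum_at_most_irreducibles S n f \<longleftrightarrow>
     (\<exists>k\<le>n. \<exists>h::nat \<Rightarrow> ('g \<Rightarrow> 'r). (\<forall>i<k. series_irreducible S (h i)) \<and>
        f = (\<lambda>x. \<Sum>i<k. h i x))"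

definition supp_gt_one :: "('g \<Rightarrow> 'r::zero) \<Rightarrow> bool" where
  "supp_gt_one f \<longleftrightarrow> (\<exists>a\<in>supp f. \<exists>b\<in>supp f. a \<noteq> b)"

end

theory Submission
  imports Defs
begin


definition wog :: "'g::linordered_ab_group_add itself \<Rightarrow> bool" where
  "wog _ \<longleftrightarrow> (\<forall>A::'g set. bdd_below A \<longrightarrow> (\<forall>B\<subseteq>A. B \<noteq> {} \<longrightarrow> (\<exists>m\<in>B. \<forall>x\<in>B. m \<le> x)))"

lemma wog_min:
  assumes "wog TYPE('g::linordered_ab_group_add)" "bdd_below (B::'g set)" "B \<noteq> {}"
  shows "\<exists>m\<in>B. \<forall>x\<in>B. m \<le> x"
  using assms unfolding wog_def by blast

lemma sum_in_S:
  assumes "semidomain S" "\<forall>i\<in>I. c i \<in> S"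
  shows "sum c I \<in> S"
  using assms(2)
proof (induction I rule: infinite_finite_induct)
  case (infinite A) then show ?case using assms(1) by (simp add: semidomain_def)
next
  case empty then show ?case using assms(1) by (simp add: semidomain_def)
next
  case (insert x F) then show ?case using assms(1) by (simp add: semidomain_def)
qed

lemma sum_zero_S:
  assumes "semidomain S" "additively_reduced S" "finite I" "\<forall>i\<in>I. c i \<in> S" "sum c I = 0"
  shows "\<forall>i\<in>I. c i = 0"
  using assms(3,4,5)
proof (induction I rule: finite_induct)
  case empty then show ?case by simp
next
  case (insert x F)
  have s: "sum c F \<in> S" using sum_in_S[OF assms(1)] insert by auto
  have "c x + sum c F = 0" using insert by simp
  hence "c x = 0" using assms(2) s insert.prems unfolding additively_reduced_def by auto
  with insert show ?case by auto
qed

lemma sum_nz_S: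
  assumes "semidomain S" "additively_reduced S" "finite I" "\<forall>i\<in>I. c i \<in> S" "i \<in> I" "c i \<noteq> 0"
  shows "sum c I \<noteq> 0"
  using sum_zero_S[OF assms(1-4)] assms(5,6) by blast

lemma sum_nonatom_S:
  assumes "semidomain S" "additively_reduced S" "finite I" "\<forall>i\<in>I. c i \<in> S"
    "i \<in> I" "j \<in> I" "i \<noteq> j" "c i \<noteq> 0" "c j \<noteq> 0"
  shows "sum c I \<notin> add_atoms S"
proof
  assume at: "sum c I \<in> add_atoms S"
  have eq: "sum c I = c i + sum c (I - {i})"
    using assms(3,5) by (simp add: sum.remove)
  have "sum c (I - {i}) \<in> S" using sum_in_S[OF assms(1), of "I - {i}" c] assms(4) by auto
  moreover have "sum c (I - {i}) \<noteq> 0"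
    using sum_nz_S[OF assms(1,2), of "I - {i}" c j] assms by auto
  moreover have "c i \<in> S" using assms by auto
  ultimately show False using at eq assms(8) unfolding add_atoms_def by blast
qed

lemma series_bdd:
  assumes "f \<in> series S"
  shows "bdd_below (supp f)"
proof (cases "supp f = {}")
  case True then show ?thesis by simp
next
  case False
  then obtain g where g: "g \<in> supp f" by auto
  have fin: "finite {h \<in> supp f. h < g}" using assms g unfolding series_def by auto
  have "\<forall>x\<in>supp f. Min (insert g {h \<in> supp f. h < g}) \<le> x"
  proof
    fix x assume x: "x \<in> supp f"
    show "Min (insert g {h \<in> supp f. h < g}) \<le> x"
    proof (cases "x < g")
      case True then show ?thesis using fin x by (intro Min_le) auto
    next
      case False
      have "Min (insert g {h \<in> supp f. h < g}) \<le> g" using fin by (intro Min_le) auto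
      then show ?thesis using False by simp
    qed
  qed
  then show ?thesis unfolding bdd_below_def by blast
qed

lemma series_coeff: "f \<in> series S \<Longrightarrow> f g \<in> S"
  unfolding series_def by auto

lemma mult_fin:
  assumes "wog TYPE('g::linordered_ab_group_add)" "p \<in> series S" "(q::'g \<Rightarrow> 'r::idom) \<in> series S"
  shows "finite {a. p a \<noteq> 0 \<and> q (k - a) \<noteq> 0}"
proof (rule ccontr)
  define I where "I = {a. p a \<noteq> 0 \<and> q (k - a) \<noteq> 0}"
  assume "\<not> finite {a. p a \<noteq> 0 \<and> q (k - a) \<noteq> 0}"
  hence inf: "infinite I" unfolding I_def .
  hence ne: "I \<noteq> {}" by auto
  have sub: "(\<lambda>a. k - a) ` I \<subseteq> supp q" unfolding I_def supp_def by auto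
  have "bdd_below ((\<lambda>a. k - a) ` I)" using series_bdd[OF assms(3)] sub by (meson bdd_below_mono)
  then obtain m where m: "m \<in> (\<lambda>a. k - a) ` I" "\<forall>x\<in>(\<lambda>a. k - a) ` I. m \<le> x"
    using wog_min[OF assms(1)] ne by blast
  then obtain a0 where a0: "a0 \<in> I" "m = k - a0" by auto
  have "\<forall>a\<in>I. a \<le> a0" using m a0 by fastforce
  hence "I \<subseteq> insert a0 {h \<in> supp p. h < a0}" unfolding I_def supp_def by fastforce
  moreover have "finite {h \<in> supp p. h < a0}" using assms(2) a0 unfolding series_def I_def supp_def by auto
  ultimately show False using inf finite_subset by blast
qed



lemma series_mult_comm: "series_mult p q = series_mult q p"
  unfolding series_mult_def
proof
  fix k
  show "(\<Sum>a\<in>{a. p a \<noteq> 0 \<and> q (k - a) \<noteq> 0}. p a * q (k - a)) = (\<Sum>a\<in>{a. q a \<noteq> 0 \<and> p (k - a) \<noteq> 0}. q a * p (k - a))"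
    by (rule sum.reindex_bij_witness[where i="\<lambda>a. k - a" and j="\<lambda>a. k - a"]) (auto simp: mult.commute)
qed

lemma mult_in_S:
  assumes "semidomain S" "p \<in> series S" "q \<in> series S"
  shows "series_mult p q k \<in> S"
  unfolding series_mult_def
  using assms by (intro sum_in_S) (auto simp: semidomain_def series_def)

lemma mult_nz_iff:
  assumes "semidomain S" "additively_reduced S" "wog TYPE('g::linordered_ab_group_add)"
    "p \<in> series S" "(q::'g \<Rightarrow> 'r::idom) \<in> series S"
  shows "series_mult p q k \<noteq> 0 \<longleftrightarrow> (\<exists>a. p a \<noteq> 0 \<and> q (k - a) \<noteq> 0)"
proof
  assume "series_mult p q k \<noteq> 0"
  then show "\<exists>a. p a \<noteq> 0 \<and> q (k - a) \<noteq> 0" unfolding series_mult_def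
    by (cases "{a. p a \<noteq> 0 \<and> q (k - a) \<noteq> 0} = {}") auto
next
  assume "\<exists>a. p a \<noteq> 0 \<and> q (k - a) \<noteq> 0"
  then obtain a where a: "p a \<noteq> 0" "q (k - a) \<noteq> 0" by blast
  show "series_mult p q k \<noteq> 0" unfolding series_mult_def
    using mult_fin[OF assms(3,4,5)] a assms(1,4,5)
    by (intro sum_nz_S[OF assms(1,2), of _ _ a]) (auto simp: semidomain_def series_def)
qed

lemma mult_nonatom:
  assumes "semidomain S" "additively_reduced S" "wog TYPE('g::linordered_ab_group_add)"
    "p \<in> series S" "(q::'g \<Rightarrow> 'r::idom) \<in> series S"
    "p a \<noteq> 0" "q (k - a) \<noteq> 0" "p b \<noteq> 0" "q (k - b) \<noteq> 0" "a \<noteq> b"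
  shows "series_mult p q k \<notin> add_atoms S"
  unfolding series_mult_def
  using mult_fin[OF assms(3,4,5)] assms
  by (intro sum_nonatom_S[OF assms(1,2), of _ _ a b]) (auto simp: semidomain_def series_def)

definition msng :: "'r::zero \<Rightarrow> 'g \<Rightarrow> 'g \<Rightarrow> 'r" where
  "msng s g = (\<lambda>k. if k = g then s else 0)"

lemma mult_msng:
  assumes "s \<noteq> 0"
  shows "series_mult (msng s g) q = (\<lambda>k. s * q (k - g))"
proof
  fix k
  have "{a. msng s g a \<noteq> 0 \<and> q (k - a) \<noteq> 0} = (if q (k - g) \<noteq> 0 then {g} else {})"
    using assms unfolding msng_def by auto
  then show "series_mult (msng s g) q k = s * q (k - g)"
    unfolding series_mult_def by (auto simp: msng_def)
qed

lemma msng_series: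
  assumes "semidomain S" "s \<in> S"
  shows "msng s g \<in> series S"
proof -
  have "supp (msng s g) \<subseteq> {g}" unfolding supp_def msng_def by auto
  hence "finite (supp (msng s g))" by (rule finite_subset) simp
  then show ?thesis using assms unfolding series_def msng_def semidomain_def by auto
qed

lemma unit_supp:
  assumes "semidomain S" "additively_reduced S" "wog TYPE('g::linordered_ab_group_add)"
    "series_unit S (h::'g \<Rightarrow> 'r::idom)" "x \<in> supp h" "y \<in> supp h"
  shows "x = y"
proof -
  obtain q where q: "q \<in> series S" "series_mult h q = series_one"
    using assms(4) unfolding series_unit_def by blast
  have h: "h \<in> series S" using assms(4) unfolding series_unit_def by blast
  have "q \<noteq> (\<lambda>_. 0)"
  proof
    assume "q = (\<lambda>_. 0)"
    hence "series_mult h q 0 = 0" unfolding series_mult_def by simp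
    then show False using fun_cong[OF q(2), of 0] unfolding series_one_def by simp
  qed
  then obtain n where n: "q n \<noteq> 0" by auto
  have "\<And>z. z \<in> supp h \<Longrightarrow> z + n = 0"
  proof -
    fix z assume z: "z \<in> supp h"
    have "h z \<noteq> 0" using z unfolding supp_def by simp
    hence "series_mult h q (z + n) \<noteq> 0"
      using mult_nz_iff[OF assms(1,2,3) h q(1), of "z + n"] n by (intro iffD2[OF mult_nz_iff[OF assms(1,2,3) h q(1)]]) (rule exI[of _ z], simp)
    then show "z + n = 0" using fun_cong[OF q(2), of "z + n"] unfolding series_one_def by (auto split: if_splits)
  qed
  from this[OF assms(5)] this[OF assms(6)] have "x + n = y + n" by simp
  then show ?thesis by simp
qed

lemma sunitsD:
  "u \<in> sunits S \<Longrightarrow> u \<in> S \<and> u \<noteq> 0 \<and> (\<exists>v\<in>S. v \<noteq> 0 \<and> u * v = 1)"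
  unfolding sunits_def by auto

lemma msng_unit:
  assumes "semidomain S" "s \<in> sunits S"
  shows "series_unit S (msng s (g::'g::linordered_ab_group_add))"
proof -
  obtain v where v: "v \<in> S" "v \<noteq> 0" "s * v = 1" using sunitsD[OF assms(2)] by blast
  have s: "s \<in> S" "s \<noteq> 0" using sunitsD[OF assms(2)] by auto
  have "series_mult (msng s g) (msng v (- g)) = series_mult (msng v (- g)) (msng s g)"
    by (rule series_mult_comm)
  also have "\<dots> = (\<lambda>k. v * msng s g (k - - g))" by (rule mult_msng[OF v(2)])
  also have "\<dots> = series_one"
    unfolding series_one_def msng_def using v(3) by (auto simp: mult.commute)
  finally show ?thesis unfolding series_unit_def using msng_series[OF assms(1) s(1)]
      msng_series[OF assms(1) v(1)] by blast
qed

lemma msng_nonunit: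
  assumes "series_unit S (msng s (0::'g::linordered_ab_group_add))" "s \<noteq> 0"
  shows "s \<in> sunits S"
proof -
  obtain q where q: "q \<in> series S" "series_mult (msng s (0::'g)) q = series_one"
    using assms(1) unfolding series_unit_def by blast
  have "s * q 0 = 1" using fun_cong[OF q(2), of 0] unfolding mult_msng[OF assms(2)] series_one_def by simp
  moreover have "msng s (0::'g) 0 \<in> S" using assms(1) unfolding series_unit_def by (blast intro: series_coeff)
  hence "s \<in> S" by (simp add: msng_def)
  moreover have "q 0 \<in> S" using q(1) by (rule series_coeff)
  moreover have "q 0 \<noteq> 0" using \<open>s * q 0 = 1\<close> by auto
  ultimately show ?thesis unfolding sunits_def using assms(2) by blast
qed



lemma get_two:
  assumes "wog TYPE('g::linordered_ab_group_add)" "(p::'g \<Rightarrow> 'r::idom) \<in> series S"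
    "x \<in> supp p" "y \<in> supp p" "x \<noteq> y"
  shows "\<exists>p0 p1. p0 \<in> supp p \<and> p1 \<in> supp p \<and> p0 < p1 \<and> (\<forall>v\<in>supp p. v = p0 \<or> p1 \<le> v)"
proof -
  have bdd: "bdd_below (supp p)" by (rule series_bdd[OF assms(2)])
  obtain p0 where p0: "p0 \<in> supp p" "\<forall>v\<in>supp p. p0 \<le> v"
    using wog_min[OF assms(1) bdd] assms(3) by blast
  have ne: "supp p - {p0} \<noteq> {}" using assms(3-5) by auto
  have bdd2: "bdd_below (supp p - {p0})" using bdd by (meson Diff_subset bdd_below_mono)
  obtain p1 where p1: "p1 \<in> supp p - {p0}" "\<forall>v\<in>supp p - {p0}. p1 \<le> v"
    using wog_min[OF assms(1) bdd2 ne] by blast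
  have "p0 \<le> p1" using p0 p1 by blast
  moreover have "p0 \<noteq> p1" using p1 by blast
  ultimately have "p0 < p1" by simp
  then show ?thesis using p0 p1 by blast
qed

lemma core:
  assumes sd: "semidomain S" and ar: "additively_reduced S" and wo: "wog TYPE('g::linordered_ab_group_add)"
    and at: "sunits S \<subseteq> add_atoms S"
    and p: "p \<in> series S" and q: "(q::'g \<Rightarrow> 'r::idom) \<in> series S"
    and hpq: "h = series_mult p q"
    and P: "p0 \<in> supp p" "p1 \<in> supp p" "p0 < p1" "\<forall>v\<in>supp p. v = p0 \<or> p1 \<le> v"
    and Q: "q0 \<in> supp q" "q1 \<in> supp q" "q0 < q1" "\<forall>v\<in>supp q. v = q0 \<or> q1 \<le> v"
    and le: "p1 - p0 \<le> q1 - q0"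
    and X: "x0 < x1" "x0 \<in> supp h" "x1 \<in> supp h"
    and u2: "\<forall>v\<in>supp h. v = x0 \<or> v = x1 \<or> x1 < v"
    and u3: "\<forall>v\<in>supp h. x1 < v \<longrightarrow> v + (x1 - x0) \<notin> supp h"
    and u4: "h x1 \<in> sunits S \<or> x1 + (x1 - x0) \<notin> supp h"
  shows False
proof -
  have supph: "\<And>k. k \<in> supp h \<longleftrightarrow> (\<exists>a. p a \<noteq> 0 \<and> q (k - a) \<noteq> 0)"
    unfolding hpq supp_def using mult_nz_iff[OF sd ar wo p q] by simp
  have pge: "p0 \<le> a" if "p a \<noteq> 0" for a
  proof -
    have "a = p0 \<or> p1 \<le> a" using P(4) that unfolding supp_def by blast
    then show ?thesis using P(3) by auto
  qed
  have qge: "q0 \<le> a" if "q a \<noteq> 0" for a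
  proof -
    have "a = q0 \<or> q1 \<le> a" using Q(4) that unfolding supp_def by blast
    then show ?thesis using Q(3) by auto
  qed
  have pn: "p p0 \<noteq> 0" "p p1 \<noteq> 0" using P unfolding supp_def by auto
  have qn: "q q0 \<noteq> 0" "q q1 \<noteq> 0" using Q unfolding supp_def by auto
  have lower: "\<And>k. k \<in> supp h \<Longrightarrow> p0 + q0 \<le> k"
  proof -
    fix k assume "k \<in> supp h"
    then obtain a where a: "p a \<noteq> 0" "q (k - a) \<noteq> 0" using supph by blast
    have "p0 + q0 \<le> a + (k - a)" using pge[OF a(1)] qge[OF a(2)] by (rule add_mono)
    then show "p0 + q0 \<le> k" by simp
  qed
  have in00: "p0 + q0 \<in> supp h" unfolding supph using pn qn by (intro exI[of _ p0]) simp
  have x0eq: "x0 = p0 + q0"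
  proof -
    have "p0 + q0 \<le> x0" using lower X by blast
    moreover have "p0 + q0 = x0 \<or> p0 + q0 = x1 \<or> x1 < p0 + q0" using u2 in00 by blast
    hence "x0 \<le> p0 + q0" using X(1) by auto
    ultimately show ?thesis by simp
  qed
  have in10: "p1 + q0 \<in> supp h" unfolding supph using pn qn by (intro exI[of _ p1]) simp
  have x1ge: "p1 + q0 \<le> x1"
  proof -
    obtain a where a: "p a \<noteq> 0" "q (x1 - a) \<noteq> 0" using supph X(3) by blast
    show ?thesis
    proof (cases "a = p0")
      case True
      have "x1 - a \<noteq> q0" using True x0eq X(1) by auto
      hence "q1 \<le> x1 - a" using Q(4) a(2) unfolding supp_def by auto
      hence "p0 + q1 \<le> x1" using True by (simp add: le_diff_eq add.commute)
      moreover have "p1 + q0 \<le> p0 + q1" using le by (simp add: algebra_simps le_diff_eq diff_le_eq)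
      ultimately show ?thesis by simp
    next
      case False
      hence "p1 \<le> a" using P(4) a(1) unfolding supp_def by auto
      moreover have "q0 \<le> x1 - a" using qge a(2) by blast
      ultimately have "p1 + q0 \<le> a + (x1 - a)" by (rule add_mono)
      then show ?thesis by simp
    qed
  qed
  have "p0 + q0 < p1 + q0" using P(3) by simp
  moreover have "p1 + q0 = x0 \<or> p1 + q0 = x1 \<or> x1 < p1 + q0" using u2 in10 by blast
  ultimately have "x1 \<le> p1 + q0" using x0eq by auto
  hence x1eq: "x1 = p1 + q0" using x1ge by simp
  have d: "x1 - x0 = p1 - p0" using x0eq x1eq by (simp add: algebra_simps)
  have in11: "p1 + q1 \<in> supp h" unfolding supph using pn qn by (intro exI[of _ p1]) simp
  show False
  proof (cases "p1 - p0 = q1 - q0")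
    case True
    have qq: "q1 = q0 + (p1 - p0)" using True by simp
    hence e1: "x1 - p0 = q1" using x1eq by (simp add: algebra_simps)
    have e2: "x1 - p1 = q0" using x1eq by simp
    have "h x1 \<notin> add_atoms S" unfolding hpq
      by (rule mult_nonatom[OF sd ar wo p q, of p0 x1 p1]) (use pn qn e1 e2 P(3) in auto)
    hence "h x1 \<notin> sunits S" using at by blast
    moreover have "x1 + (x1 - x0) = p1 + q1" using x0eq x1eq qq by (simp add: algebra_simps)
    ultimately show False using u4 in11 by simp
  next
    case False
    hence lt: "p1 - p0 < q1 - q0" using le by simp
    have in01: "p0 + q1 \<in> supp h" unfolding supph using pn qn by (intro exI[of _ p0]) simp
    have "p1 + q0 < p0 + q1" using lt by (simp add: algebra_simps less_diff_eq diff_less_eq)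
    hence "x1 < p0 + q1" using x1eq by simp
    moreover have eq: "p0 + q1 + (x1 - x0) = p1 + q1" using d by (simp add: algebra_simps)
    have "p0 + q1 + (x1 - x0) \<in> supp h" unfolding eq by (rule in11)
    ultimately have "p0 + q1 \<in> supp h \<and> x1 < p0 + q1 \<and> p0 + q1 + (x1 - x0) \<in> supp h"
      using in01 by simp
    then show False using u3 by blast
  qed
qed



lemma mono_case:
  assumes sd: "semidomain S" and p: "p \<in> series S" and q: "(q::'g::linordered_ab_group_add \<Rightarrow> 'r::idom) \<in> series S"
    and hpq: "h = series_mult p q" and u: "h u \<in> sunits S" and sub: "supp p \<subseteq> {g}"
  shows "series_unit S p"
proof -
  have pg: "p g \<noteq> 0"
  proof
    assume "p g = 0"
    hence "p = (\<lambda>_. 0)" using sub unfolding supp_def by auto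
    hence "h u = 0" unfolding hpq series_mult_def by simp
    then show False using u unfolding sunits_def by simp
  qed
  have peq: "p = msng (p g) g" unfolding msng_def
  proof
    fix k show "p k = (if k = g then p g else 0)" using sub unfolding supp_def by auto
  qed
  have "h = (\<lambda>k. p g * q (k - g))" unfolding hpq by (subst peq, rule mult_msng[OF pg])
  hence hu: "h u = p g * q (u - g)" by simp
  obtain v where v: "v \<in> S" "v \<noteq> 0" "h u * v = 1" using sunitsD[OF u] by blast
  have "p g \<in> S" using p by (rule series_coeff)
  moreover have "q (u - g) * v \<in> S" using series_coeff[OF q] v(1) sd unfolding semidomain_def by blast
  moreover have "p g * (q (u - g) * v) = 1" using v(3) hu by (simp add: mult.assoc)
  moreover hence "q (u - g) * v \<noteq> 0" by auto
  ultimately have "p g \<in> sunits S" unfolding sunits_def using pg by blast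
  then show ?thesis using msng_unit[OF sd] peq by metis
qed

lemma not_single:
  assumes "\<not> (\<exists>g. supp p \<subseteq> {g})"
  shows "\<exists>x y. x \<in> supp p \<and> y \<in> supp p \<and> x \<noteq> y"
proof -
  obtain x where "x \<in> supp p" using assms by blast
  moreover obtain y where "y \<in> supp p" "y \<noteq> x" using assms by blast
  ultimately show ?thesis by blast
qed

lemma crit:
  assumes sd: "semidomain S" and ar: "additively_reduced S" and wo: "wog TYPE('g::linordered_ab_group_add)"
    and at: "sunits S \<subseteq> add_atoms S"
    and h: "(h::'g \<Rightarrow> 'r::idom) \<in> series S" and u: "h u \<in> sunits S"
    and X: "x0 < x1" "x0 \<in> supp h" "x1 \<in> supp h"
    and u2: "\<forall>v\<in>supp h. v = x0 \<or> v = x1 \<or> x1 < v"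
    and u3: "\<forall>v\<in>supp h. x1 < v \<longrightarrow> v + (x1 - x0) \<notin> supp h"
    and u4: "h x1 \<in> sunits S \<or> x1 + (x1 - x0) \<notin> supp h"
  shows "series_irreducible S h"
proof -
  have nz: "h \<noteq> (\<lambda>_. 0)" using u unfolding sunits_def by auto
  have nu: "\<not> series_unit S h" using unit_supp[OF sd ar wo _ X(2,3)] X(1) by auto
  have "series_unit S p \<or> series_unit S q" if p: "p \<in> series S" and q: "q \<in> series S"
    and hpq: "h = series_mult p q" for p q
  proof (cases "\<exists>g. supp p \<subseteq> {g}")
    case True
    then show ?thesis using mono_case[OF sd p q hpq u] by blast
  next
    case Fp: False
    show ?thesis
    proof (cases "\<exists>g. supp q \<subseteq> {g}")
      case True
      have hqp: "h = series_mult q p" using hpq series_mult_comm by metis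
      then show ?thesis using mono_case[OF sd q p hqp u] True by blast
    next
      case Fq: False
      obtain x y where "x \<in> supp p" "y \<in> supp p" "x \<noteq> y" using not_single[OF Fp] by blast
      then obtain p0 p1 where P: "p0 \<in> supp p" "p1 \<in> supp p" "p0 < p1" "\<forall>v\<in>supp p. v = p0 \<or> p1 \<le> v"
        using get_two[OF wo p] by blast
      obtain x' y' where "x' \<in> supp q" "y' \<in> supp q" "x' \<noteq> y'" using not_single[OF Fq] by blast
      then obtain q0 q1 where Q: "q0 \<in> supp q" "q1 \<in> supp q" "q0 < q1" "\<forall>v\<in>supp q. v = q0 \<or> q1 \<le> v"
        using get_two[OF wo q] by blast
      have False
      proof (cases "p1 - p0 \<le> q1 - q0")
        case True
        show False by (rule core[OF sd ar wo at p q hpq P Q True X u2 u3 u4])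
      next
        case False
        hence le: "q1 - q0 \<le> p1 - p0" by simp
        have hqp: "h = series_mult q p" using hpq series_mult_comm by metis
        show False by (rule core[OF sd ar wo at q p hqp Q P le X u2 u3 u4])
      qed
      then show ?thesis ..
    qed
  qed
  then show ?thesis unfolding series_irreducible_def using h nz nu by blast
qed



definition gm :: "'g::linordered_ab_group_add \<Rightarrow> nat \<Rightarrow> 'g" where
  "gm d n = ((+) d ^^ n) 0"

lemma gm_0[simp]: "gm d 0 = 0" by (simp add: gm_def)
lemma gm_Suc[simp]: "gm d (Suc n) = d + gm d n" by (simp add: gm_def)

lemma gm_mono: assumes "0 < d" "m < n" shows "gm d m < gm d n"
  using assms(2)
proof (induction n)
  case 0 then show ?case by simp
next
  case (Suc n)
  show ?case
  proof (cases "m = n")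
    case True then show ?thesis using assms(1) by simp
  next
    case False
    hence "gm d m < gm d n" using Suc by simp
    also have "\<dots> < d + gm d n" using assms(1) by simp
    finally show ?thesis by simp
  qed
qed

lemma gm_le: assumes "0 < d" "m \<le> n" shows "gm d m \<le> gm d n"
  using gm_mono[OF assms(1)] assms(2) by (cases "m = n") (auto intro: less_imp_le)

lemma arch:
  assumes wo: "wog TYPE('g::linordered_ab_group_add)" and d: "0 < (d::'g)"
  shows "\<exists>n. x < b + gm d n"
proof (rule ccontr)
  assume "\<not> (\<exists>n. x < b + gm d n)"
  hence all: "\<forall>n. b + gm d n \<le> x" by (simp add: not_less)
  define B where "B = range (\<lambda>n. x - gm d n)"
  have "bdd_below B" unfolding B_def bdd_below_def using all
    by (auto simp: le_diff_eq add.commute)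
  moreover have "B \<noteq> {}" unfolding B_def by simp
  ultimately obtain m where m: "m \<in> B" "\<forall>y\<in>B. m \<le> y" using wog_min[OF wo] by blast
  then obtain n0 where n0: "m = x - gm d n0" unfolding B_def by auto
  have "x - gm d (Suc n0) \<in> B" unfolding B_def by (rule rangeI)
  hence "m \<le> x - gm d (Suc n0)" using m by blast
  hence "x - gm d n0 \<le> x - (d + gm d n0)" using n0 by simp
  then show False using d by simp
qed

definition fl :: "'g::linordered_ab_group_add \<Rightarrow> 'g \<Rightarrow> 'g \<Rightarrow> nat" where
  "fl b d x = (LEAST n. x < b + gm d (Suc n))"

lemma fl_unique:
  assumes "0 < d" "b + gm d n \<le> x" "x < b + gm d (Suc n)"
  shows "fl b d x = n"
  unfolding fl_def
proof (rule Least_equality)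
  show "x < b + gm d (Suc n)" by (rule assms(3))
next
  fix m assume m: "x < b + gm d (Suc m)"
  show "n \<le> m"
  proof (rule ccontr)
    assume "\<not> n \<le> m"
    hence "Suc m \<le> n" by simp
    hence "gm d (Suc m) \<le> gm d n" by (rule gm_le[OF assms(1)])
    hence "b + gm d (Suc m) \<le> x" using assms(2) by (meson add_left_mono order_trans)
    then show False using m by simp
  qed
qed

lemma fl_char:
  assumes wo: "wog TYPE('g::linordered_ab_group_add)" and d: "0 < (d::'g)" and bx: "b \<le> x"
  shows "b + gm d (fl b d x) \<le> x \<and> x < b + gm d (Suc (fl b d x))"
proof -
  obtain n where n: "x < b + gm d n" using arch[OF wo d] by blast
  have "gm d n \<le> gm d (Suc n)" by (rule gm_le[OF d]) simp
  hence ex: "x < b + gm d (Suc n)" using n by (meson add_left_mono order_less_le_trans)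
  have up: "x < b + gm d (Suc (fl b d x))" unfolding fl_def by (rule LeastI[of _ n]) (rule ex)
  have lo: "b + gm d (fl b d x) \<le> x"
  proof (cases "fl b d x")
    case 0 then show ?thesis using bx by simp
  next
    case (Suc k)
    have "\<not> x < b + gm d (Suc k)"
    proof
      assume "x < b + gm d (Suc k)"
      hence "fl b d x \<le> k" unfolding fl_def by (rule Least_le)
      then show False using Suc by simp
    qed
    then show ?thesis using Suc by simp
  qed
  show ?thesis using up lo by blast
qed

lemma fl_step:
  assumes wo: "wog TYPE('g::linordered_ab_group_add)" and d: "0 < (d::'g)" and bx: "b \<le> x"
  shows "fl b d (x + d) = Suc (fl b d x)"
proof -
  have c: "b + gm d (fl b d x) \<le> x" "x < b + gm d (Suc (fl b d x))" using fl_char[OF wo d bx] by auto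
  show ?thesis
  proof (rule fl_unique[OF d])
    show "b + gm d (Suc (fl b d x)) \<le> x + d" using c(1) by (simp add: algebra_simps)
    show "x + d < b + gm d (Suc (Suc (fl b d x)))" using c(2) by (simp add: algebra_simps)
  qed
qed

lemma fl_zero:
  assumes d: "0 < (d::'g::linordered_ab_group_add)" and "b \<le> x" "x < b + d"
  shows "fl b d x = 0"
  using assms by (intro fl_unique) auto

definition par :: "'g::linordered_ab_group_add \<Rightarrow> 'g \<Rightarrow> 'g \<Rightarrow> bool" where
  "par b d x = even (fl b d x)"

lemma par_step:
  assumes wo: "wog TYPE('g::linordered_ab_group_add)" and d: "0 < (d::'g)" and bx: "b \<le> x"
  shows "par b d (x + d) \<longleftrightarrow> \<not> par b d x"
  unfolding par_def fl_step[OF wo d bx] by simp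

lemma par_base:
  assumes d: "0 < (d::'g::linordered_ab_group_add)" and "b \<le> x" "x < b + d"
  shows "par b d x"
  unfolding par_def fl_zero[OF assms] by simp



lemma bad_atom:
  assumes sd: "semidomain S" and af: "additively_furstenberg S" and ne: "add_atoms S \<noteq> sunits S"
  shows "\<exists>a\<in>add_atoms S. a \<notin> sunits S"
proof (rule ccontr)
  assume "\<not> (\<exists>a\<in>add_atoms S. a \<notin> sunits S)"
  hence sub: "add_atoms S \<subseteq> sunits S" by blast
  then obtain u where u: "u \<in> sunits S" "u \<notin> add_atoms S" using ne by blast
  have one: "(1::'a) \<in> S" "(1::'a) \<noteq> 0" using sd unfolding semidomain_def by auto
  obtain a t where a: "a \<in> add_atoms S" "t \<in> S" "1 = a + t"
    using af one unfolding additively_furstenberg_def by blast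
  obtain u' where u': "u' \<in> S" "u' \<noteq> 0" "u * u' = 1" using sunitsD[OF u(1)] by blast
  have aS: "a \<in> S" "a \<noteq> 0" using a unfolding add_atoms_def by auto
  have "u \<in> add_atoms S"
    unfolding add_atoms_def
  proof (intro CollectI conjI ballI impI)
    show "u \<in> S" "u \<noteq> 0" using sunitsD[OF u(1)] by auto
  next
    fix b c assume bc: "b \<in> S" "c \<in> S" "u = b + c"
    have "a = a * u' * u" using u'(3) by (simp add: mult.assoc mult.commute[of u' u])
    also have "\<dots> = a * u' * b + a * u' * c" using bc(3) by (simp add: distrib_left)
    finally have "a = a * u' * b + a * u' * c" .
    moreover have "a * u' * b \<in> S" "a * u' * c \<in> S" using sd aS u' bc unfolding semidomain_def by auto
    ultimately have "a * u' * b = 0 \<or> a * u' * c = 0" using a(1) unfolding add_atoms_def by blast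
    then show "b = 0 \<or> c = 0" using aS u' by auto
  qed
  then show False using u by blast
qed

lemma dir31:
  assumes sd: "semidomain S" and ar: "additively_reduced S" and af: "additively_furstenberg S"
    and wo: "wog TYPE('g::linordered_ab_group_add)" and g0: "\<exists>g::'g. g \<noteq> 0" and n: "n \<ge> 1"
    and H: "\<forall>f::'g \<Rightarrow> 'r::idom. f \<in> series S \<and> supp_gt_one f \<longrightarrow> sum_at_most_irreducibles S n f"
  shows "add_atoms S = sunits S"
proof (rule ccontr)
  assume "add_atoms S \<noteq> sunits S"
  then obtain a where a: "a \<in> add_atoms S" "a \<notin> sunits S" using bad_atom[OF sd af] by blast
  have aS: "a \<in> S" "a \<noteq> 0" using a unfolding add_atoms_def by auto
  obtain g :: 'g where g: "0 < g"
  proof -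
    obtain g' :: 'g where "g' \<noteq> 0" using g0 by blast
    show ?thesis
    proof (cases "0 < g'")
      case True then show ?thesis by (rule that)
    next
      case False
      hence "g' < 0" using \<open>g' \<noteq> 0\<close> by simp
      hence "0 < - g'" by simp
      then show ?thesis by (rule that)
    qed
  qed
  define Pos where "Pos = gm g ` {..n}"
  have inj: "inj_on (gm g) {..n}"
  proof (rule inj_onI)
    fix x y assume "gm g x = gm g y"
    then show "x = y" using gm_mono[OF g, of x y] gm_mono[OF g, of y x] by (cases x y rule: linorder_cases) auto
  qed
  have cardP: "card Pos = Suc n" unfolding Pos_def using card_image[OF inj] by simp
  have finP: "finite Pos" unfolding Pos_def by simp
  define f :: "'g \<Rightarrow> 'r" where "f = (\<lambda>k. if k \<in> Pos then a else 0)"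
  have zS: "(0::'r) \<in> S" using sd unfolding semidomain_def by auto
  have oS: "(1::'r) \<in> S" using sd unfolding semidomain_def by auto
  have fin_series: "h \<in> series S" if "\<forall>x. h x \<in> S" "finite (supp h)" for h :: "'g \<Rightarrow> 'r"
    using that unfolding series_def by auto
  have fS: "f \<in> series S"
    by (rule fin_series) (auto simp: f_def aS zS intro: finite_subset[OF _ finP] simp: supp_def)
  have "0 \<in> Pos" "g \<in> Pos" unfolding Pos_def using n by (auto intro!: image_eqI[of 0 _ 0] image_eqI[of g _ 1])
  hence "0 \<in> supp f" "g \<in> supp f" unfolding supp_def f_def using aS by auto
  moreover have "(0::'g) \<noteq> g" using g by simp
  ultimately have "supp_gt_one f" unfolding supp_gt_one_def by blast
  hence "sum_at_most_irreducibles S n f" using H[rule_format, of f] fS by blast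
  then obtain k h where k: "k \<le> n" and hirr: "\<forall>i<k. series_irreducible S (h i)"
      and feq: "f = (\<lambda>x. \<Sum>i<k. h i x)"
    unfolding sum_at_most_irreducibles_def by blast
  have hS: "h i x \<in> S" if "i < k" for i x
  proof -
    have "h i \<in> series S" using hirr that unfolding series_irreducible_def by blast
    then show ?thesis by (rule series_coeff)
  qed
  have fx: "f x = (\<Sum>i<k. h i x)" for x using feq by simp
  have c3: "h i x = 0" if "i < k" "x \<notin> Pos" for i x
  proof -
    have "(\<Sum>i<k. h i x) = 0" using fx[of x] that unfolding f_def by simp
    then show ?thesis using sum_zero_S[OF sd ar, of "{..<k}" "\<lambda>i. h i x"] hS that by auto
  qed
  have c2: "i = j" if "i < k" "j < k" "h i x \<noteq> 0" "h j x \<noteq> 0" for i j x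
  proof (rule ccontr)
    assume "i \<noteq> j"
    hence "(\<Sum>i<k. h i x) \<notin> add_atoms S"
      using sum_nonatom_S[OF sd ar, of "{..<k}" "\<lambda>i. h i x" i j] hS that by auto
    moreover have "x \<in> Pos" using c3 that by blast
    ultimately show False using fx[of x] a unfolding f_def by simp
  qed
  have c4: "h i x = a" if "i < k" "h i x \<noteq> 0" for i x
  proof -
    have "(\<Sum>j<k. h j x) = h i x + (\<Sum>j\<in>{..<k} - {i}. h j x)"
      using that by (simp add: sum.remove)
    also have "(\<Sum>j\<in>{..<k} - {i}. h j x) = 0" using c2 that by (intro sum.neutral) blast
    finally have "(\<Sum>j<k. h j x) = h i x" by simp
    moreover have "x \<in> Pos" using c3 that by blast
    ultimately show ?thesis using fx[of x] unfolding f_def by simp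
  qed
  have c1: "\<exists>i<k. h i x \<noteq> 0" if "x \<in> Pos" for x
  proof (rule ccontr)
    assume "\<not> (\<exists>i<k. h i x \<noteq> 0)"
    hence "(\<Sum>i<k. h i x) = 0" by simp
    then show False using fx[of x] that aS unfolding f_def by simp
  qed
  define sel where "sel x = (SOME i. i < k \<and> h i x \<noteq> 0)" for x
  have sel: "sel x < k \<and> h (sel x) x \<noteq> 0" if "x \<in> Pos" for x
    unfolding sel_def using someI_ex[OF c1[OF that]] by blast
  have "\<not> inj_on sel Pos"
  proof
    assume "inj_on sel Pos"
    hence "card (sel ` Pos) = Suc n" using card_image cardP by metis
    moreover have "sel ` Pos \<subseteq> {..<k}" using sel by auto
    hence "card (sel ` Pos) \<le> k" using card_mono[of "{..<k}"] by fastforce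
    ultimately show False using k by simp
  qed
  then obtain x y where xy: "x \<in> Pos" "y \<in> Pos" "x \<noteq> y" "sel x = sel y"
    unfolding inj_on_def by blast
  define i where "i = sel x"
  have i: "i < k" "h i x \<noteq> 0" "h i y \<noteq> 0" using sel xy unfolding i_def by metis+
  define c :: "'g \<Rightarrow> 'r" where "c = (\<lambda>z. if h i z \<noteq> 0 then 1 else 0)"
  have hc: "h i = series_mult (msng a 0) c"
    unfolding mult_msng[OF aS(2)] c_def using c4[OF i(1)] by fastforce
  have "supp c \<subseteq> Pos" unfolding c_def supp_def using c3[OF i(1)] by auto
  hence cS: "c \<in> series S" by (intro fin_series) (auto simp: c_def zS oS intro: finite_subset[OF _ finP])
  have mS: "msng a 0 \<in> series S" by (rule msng_series[OF sd aS(1)])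
  have "series_unit S (msng a (0::'g)) \<or> series_unit S c"
    using hirr i(1) hc mS cS unfolding series_irreducible_def by blast
  moreover have "\<not> series_unit S (msng a (0::'g))" using msng_nonunit aS(2) a(2) by blast
  moreover have "\<not> series_unit S c"
  proof
    assume "series_unit S c"
    moreover have "x \<in> supp c" "y \<in> supp c" unfolding c_def supp_def using i by auto
    ultimately show False using unit_supp[OF sd ar wo] xy(3) by blast
  qed
  ultimately show False by blast
qed



lemma sami_one:
  assumes "series_irreducible S f"
  shows "sum_at_most_irreducibles S 2 f"
  unfolding sum_at_most_irreducibles_def
  by (rule exI[of _ 1], rule conjI, simp, rule exI[of _ "\<lambda>_. f"]) (use assms in simp)

lemma sami_two:
  assumes "series_irreducible S A" "series_irreducible S B" "f = (\<lambda>x. A x + B x)"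
  shows "sum_at_most_irreducibles S 2 f"
  unfolding sum_at_most_irreducibles_def
  by (rule exI[of _ 2], rule conjI, simp, rule exI[of _ "\<lambda>i. if i = 0 then A else B"])
     (use assms in \<open>auto simp: numeral_2_eq_2 less_Suc_eq\<close>)

lemma sami_mono:
  assumes "sum_at_most_irreducibles S m f" "m \<le> n"
  shows "sum_at_most_irreducibles S n f"
proof -
  obtain k h where "k \<le> m" "\<forall>i<k. series_irreducible S (h i)" "f = (\<lambda>x. \<Sum>i<k. h i x)"
    using assms(1) unfolding sum_at_most_irreducibles_def by blast
  moreover have "k \<le> n" using calculation(1) assms(2) by simp
  ultimately show ?thesis unfolding sum_at_most_irreducibles_def by blast
qed

lemma dec:
  assumes af: "additively_furstenberg S" and at: "add_atoms S = sunits S"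
    and "x \<in> S" "x \<noteq> 0" "x \<notin> sunits S"
  shows "\<exists>a r. a \<in> sunits S \<and> r \<in> S \<and> r \<noteq> 0 \<and> x = a + r"
proof -
  obtain a t where "a \<in> add_atoms S" "t \<in> S" "x = a + t" using af assms(3,4) unfolding additively_furstenberg_def by blast
  moreover have "t \<noteq> 0" using calculation assms(5) at by auto
  ultimately show ?thesis using at by blast
qed

lemma pser:
  assumes "f \<in> series S" "\<forall>v. h v \<in> S" "supp h \<subseteq> supp f"
  shows "h \<in> series S"
  unfolding series_def
proof (intro CollectI conjI ballI allI)
  fix v show "h v \<in> S" using assms(2) by blast
next
  fix g assume g: "g \<in> supp h"
  have "{k \<in> supp h. k < g} \<subseteq> {k \<in> supp f. k < g}" using assms(3) by blast
  moreover have "finite {k \<in> supp f. k < g}" using assms(1) assms(3) g unfolding series_def by blast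
  ultimately show "finite {k \<in> supp h. k < g}" by (rule finite_subset)
qed



locale constr =
  fixes S :: "'r::idom set" and f :: "'g::linordered_ab_group_add \<Rightarrow> 'r" and t0 t1 :: 'g
  assumes sd: "semidomain S" and ar: "additively_reduced S" and af: "additively_furstenberg S"
    and wo: "wog TYPE('g)" and at: "add_atoms S = sunits S" and fS: "f \<in> series S"
    and T0: "t0 \<in> supp f" and T1: "t1 \<in> supp f" and T01: "t0 < t1"
    and Tall: "\<forall>v\<in>supp f. v = t0 \<or> t1 \<le> v"
begin

abbreviation "\<delta> \<equiv> t1 - t0"

lemma dpos: "0 < \<delta>" using T01 by simp

lemma at_sub: "sunits S \<subseteq> add_atoms S" using at by simp

lemma zS: "(0::'r) \<in> S" using sd unfolding semidomain_def by auto

lemma fvS: "f v \<in> S" using fS by (rule series_coeff)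

lemma sunS: "u \<in> sunits S \<Longrightarrow> u \<in> S \<and> u \<noteq> 0" unfolding sunits_def by auto

lemma caseI:
  assumes n0: "f t0 \<notin> sunits S" and n1: "f t1 \<notin> sunits S"
  shows "sum_at_most_irreducibles S 2 f"
proof -
  have f0: "f t0 \<noteq> 0" "f t1 \<noteq> 0" using T0 T1 unfolding supp_def by auto
  obtain a0 r0 where d0: "a0 \<in> sunits S" "r0 \<in> S" "r0 \<noteq> 0" "f t0 = a0 + r0"
    using dec[OF af at fvS f0(1) n0] by blast
  obtain a1 r1 where d1: "a1 \<in> sunits S" "r1 \<in> S" "r1 \<noteq> 0" "f t1 = a1 + r1"
    using dec[OF af at fvS f0(2) n1] by blast
  define p where "p = par t0 \<delta>"
  have pstep: "p (v + \<delta>) \<longleftrightarrow> \<not> p v" if "t0 \<le> v" for v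
    unfolding p_def by (rule par_step[OF wo dpos that])
  have pt0: "p t0" unfolding p_def by (rule par_base[OF dpos]) (use dpos in auto)
  have pt1: "\<not> p t1" using pstep[of t0] pt0 by simp
  have pt2: "p (t1 + \<delta>)" using pstep[of t1] pt1 T01 by simp
  define A where "A = (\<lambda>v. if v = t0 then a0 else if v = t1 then r1
      else if v \<in> supp f \<and> t1 < v \<and> \<not> p v then f v else 0)"
  define B where "B = (\<lambda>v. if v = t0 then r0 else if v = t1 then a1
      else if v \<in> supp f \<and> t1 < v \<and> p v then f v else 0)"
  have t01: "t0 \<noteq> t1" using T01 by simp
  have sum: "f = (\<lambda>x. A x + B x)"
  proof
    fix x
    show "f x = A x + B x"
    proof (cases "x = t0 \<or> x = t1")
      case True then show ?thesis unfolding A_def B_def using d0 d1 t01 by (auto simp: add.commute)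
    next
      case False
      show ?thesis
      proof (cases "x \<in> supp f")
        case True
        hence "t1 < x" using Tall False by force
        then show ?thesis unfolding A_def B_def using False True by auto
      next
        case nx: False
        hence "f x = 0" unfolding supp_def by simp
        then show ?thesis unfolding A_def B_def using False nx by auto
      qed
    qed
  qed
  have a0S: "a0 \<in> S" "a0 \<noteq> 0" "a1 \<in> S" "a1 \<noteq> 0" using sunS d0(1) d1(1) by auto
  have AS: "A \<in> series S"
  proof (rule pser[OF fS])
    show "\<forall>v. A v \<in> S" unfolding A_def using a0S d1 fvS zS by auto
    show "supp A \<subseteq> supp f" unfolding A_def supp_def using T0 T1 unfolding supp_def by auto
  qed
  have BS: "B \<in> series S"
  proof (rule pser[OF fS])
    show "\<forall>v. B v \<in> S" unfolding B_def using a0S d0 fvS zS by auto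
    show "supp B \<subseteq> supp f" unfolding B_def supp_def using T0 T1 unfolding supp_def by auto
  qed
  have suppA: "v = t0 \<or> v = t1 \<or> (v \<in> supp f \<and> t1 < v \<and> \<not> p v)" if "v \<in> supp A" for v
    using that unfolding A_def supp_def by (auto split: if_splits)
  have suppB: "v = t0 \<or> v = t1 \<or> (v \<in> supp f \<and> t1 < v \<and> p v)" if "v \<in> supp B" for v
    using that unfolding B_def supp_def by (auto split: if_splits)
  have irrA: "series_irreducible S A"
  proof (rule crit[OF sd ar wo at_sub AS, of t0 t0 t1])
    show "A t0 \<in> sunits S" unfolding A_def using d0 by simp
    show "t0 < t1" by (rule T01)
    show "t0 \<in> supp A" unfolding A_def supp_def using a0S by simp
    show "t1 \<in> supp A" unfolding A_def supp_def using d1 t01 by simp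
    show "\<forall>v\<in>supp A. v = t0 \<or> v = t1 \<or> t1 < v" using suppA by blast
    show "\<forall>v\<in>supp A. t1 < v \<longrightarrow> v + \<delta> \<notin> supp A"
    proof (intro ballI impI notI)
      fix v assume v: "v \<in> supp A" "t1 < v" "v + \<delta> \<in> supp A"
      have nv: "\<not> p v" using suppA[OF v(1)] v(2) T01 by auto
      have "t1 < v + \<delta>" using v(2) dpos by (simp add: add_strict_increasing2 less_imp_le)
      note l1 = this
      have l2: "t0 < v + \<delta>" by (rule less_trans[OF T01 l1])
      have "v + \<delta> \<noteq> t0" using less_imp_neq[OF l2] by (rule not_sym)
      moreover have "v + \<delta> \<noteq> t1" using less_imp_neq[OF l1] by (rule not_sym)
      ultimately have "v + \<delta> \<noteq> t0" "v + \<delta> \<noteq> t1" "t1 < v + \<delta>" using l1 by blast+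
      hence "\<not> p (v + \<delta>)" using suppA[OF v(3)] by blast
      moreover have "t0 \<le> v" using v(2) T01 by simp
      ultimately show False using pstep nv by blast
    qed
    show "A t1 \<in> sunits S \<or> t1 + \<delta> \<notin> supp A"
    proof (rule disjI2, rule notI)
      assume "t1 + \<delta> \<in> supp A"
      moreover have "t1 < t1 + \<delta>" using dpos by simp
      ultimately have "\<not> p (t1 + \<delta>)" using suppA T01 by fastforce
      then show False using pt2 by simp
    qed
  qed
  have irrB: "series_irreducible S B"
  proof (rule crit[OF sd ar wo at_sub BS, of t1 t0 t1])
    show "B t1 \<in> sunits S" unfolding B_def using d1 t01 by simp
    show "t0 < t1" by (rule T01)
    show "t0 \<in> supp B" unfolding B_def supp_def using d0 by simp
    show "t1 \<in> supp B" unfolding B_def supp_def using a0S t01 by simp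
    show "\<forall>v\<in>supp B. v = t0 \<or> v = t1 \<or> t1 < v" using suppB by blast
    show "\<forall>v\<in>supp B. t1 < v \<longrightarrow> v + \<delta> \<notin> supp B"
    proof (intro ballI impI notI)
      fix v assume v: "v \<in> supp B" "t1 < v" "v + \<delta> \<in> supp B"
      have nv: "p v" using suppB[OF v(1)] v(2) T01 by auto
      have "t1 < v + \<delta>" using v(2) dpos by (simp add: add_strict_increasing2 less_imp_le)
      note l1 = this
      have l2: "t0 < v + \<delta>" by (rule less_trans[OF T01 l1])
      have "v + \<delta> \<noteq> t0" using less_imp_neq[OF l2] by (rule not_sym)
      moreover have "v + \<delta> \<noteq> t1" using less_imp_neq[OF l1] by (rule not_sym)
      ultimately have "v + \<delta> \<noteq> t0" "v + \<delta> \<noteq> t1" "t1 < v + \<delta>" using l1 by blast+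
      hence "p (v + \<delta>)" using suppB[OF v(3)] by blast
      moreover have "t0 \<le> v" using v(2) T01 by simp
      ultimately show False using pstep nv by blast
    qed
    show "B t1 \<in> sunits S \<or> t1 + \<delta> \<notin> supp B" unfolding B_def using d1 t01 by simp
  qed
  show ?thesis by (rule sami_two[OF irrA irrB sum])
qed

end



context constr
begin

lemma caseII_empty:
  assumes u: "f t0 \<in> sunits S \<or> f t1 \<in> sunits S"
    and c: "c = (if f t1 \<in> sunits S then t1 else t0)"
    and empty: "{v \<in> supp f. v - \<delta> \<in> supp f \<and> c < v - \<delta>} = {}"
  shows "sum_at_most_irreducibles S 2 f"
proof -
  have ct: "c \<le> t1" using c T01 by auto
  have "series_irreducible S f"
  proof (rule crit[OF sd ar wo at_sub fS, of "if f t0 \<in> sunits S then t0 else t1" t0 t1])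
    show "f (if f t0 \<in> sunits S then t0 else t1) \<in> sunits S" using u by auto
    show "t0 < t1" "t0 \<in> supp f" "t1 \<in> supp f" using T01 T0 T1 by auto
    show "\<forall>v\<in>supp f. v = t0 \<or> v = t1 \<or> t1 < v" using Tall by force
    show "\<forall>v\<in>supp f. t1 < v \<longrightarrow> v + \<delta> \<notin> supp f"
    proof (intro ballI impI notI)
      fix v assume v: "v \<in> supp f" "t1 < v" "v + \<delta> \<in> supp f"
      have "v + \<delta> - \<delta> = v" by simp
      hence "v + \<delta> \<in> {v \<in> supp f. v - \<delta> \<in> supp f \<and> c < v - \<delta>}"
        using v ct by (auto intro: le_less_trans)
      then show False using empty by blast
    qed
    show "f t1 \<in> sunits S \<or> t1 + \<delta> \<notin> supp f"
    proof (cases "f t1 \<in> sunits S")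
      case True then show ?thesis by simp
    next
      case False
      hence "c = t0" using c by simp
      have "t1 + \<delta> \<notin> supp f"
      proof
        assume "t1 + \<delta> \<in> supp f"
        moreover have "t1 + \<delta> - \<delta> = t1" by simp
        ultimately have "t1 + \<delta> \<in> {v \<in> supp f. v - \<delta> \<in> supp f \<and> c < v - \<delta>}"
          using T1 T01 \<open>c = t0\<close> by auto
        then show False using empty by blast
      qed
      then show ?thesis by simp
    qed
  qed
  then show ?thesis by (rule sami_one)
qed


lemma caseII_ne:
  assumes u: "f t0 \<in> sunits S \<or> f t1 \<in> sunits S"
    and c: "c = (if f t1 \<in> sunits S then t1 else t0)"
    and ne: "{v \<in> supp f. v - \<delta> \<in> supp f \<and> c < v - \<delta>} \<noteq> {}"
  shows "sum_at_most_irreducibles S 2 f"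
proof -
  define Pairs where "Pairs = {v \<in> supp f. v - \<delta> \<in> supp f \<and> c < v - \<delta>}"
  have ct: "c \<le> t1" "t0 \<le> c" using c T01 by auto
  have "Pairs \<subseteq> supp f" unfolding Pairs_def by blast
  hence bddP: "bdd_below Pairs" using series_bdd[OF fS] by (rule bdd_below_mono[rotated])
  have neP: "Pairs \<noteq> {}" using ne unfolding Pairs_def .
  obtain b1 where b1: "b1 \<in> Pairs" "\<forall>v\<in>Pairs. b1 \<le> v"
    using wog_min[OF wo bddP neP] by blast
  define b0 where "b0 = b1 - \<delta>"
  have b1T: "b1 \<in> supp f" and b0T: "b0 \<in> supp f" and cb0: "c < b0"
    using b1(1) unfolding Pairs_def b0_def by auto
  have b1eq: "b1 = b0 + \<delta>" unfolding b0_def by simp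
  have bd: "b1 - b0 = \<delta>" unfolding b0_def by simp
  have t1b0: "t1 \<le> b0"
  proof -
    have "t0 < b0" using ct(2) cb0 by (rule le_less_trans)
    hence "b0 \<noteq> t0" by simp
    then show ?thesis using Tall b0T by blast
  qed
  have b0b1: "b0 < b1" unfolding b1eq using dpos by (rule less_add_same_cancel1[THEN iffD2])
  have t1b1: "t1 < b1" using t1b0 b0b1 by (rule le_less_trans)
  have t0t1: "t0 < t1" by (rule T01)
  have t0b0: "t0 < b0" using t0t1 t1b0 by (rule less_le_trans)
  have t0b1: "t0 < b1" using t0t1 t1b1 by (rule less_trans)
  have b0t1: "f t1 \<notin> sunits S" if "b0 = t1"
  proof
    assume "f t1 \<in> sunits S"
    hence "c = t1" using c by simp
    then show False using cb0 that by simp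
  qed
  have minP: "b1 \<le> v" if "v \<in> supp f" "v - \<delta> \<in> supp f" "c < v - \<delta>" for v
  proof -
    have "v \<in> Pairs" unfolding Pairs_def using that by blast
    then show ?thesis using b1(2) by blast
  qed
  obtain aB rA where dB: "aB \<in> sunits S" "rA \<in> S" "f b0 = aB + rA" "f b0 \<notin> sunits S \<longrightarrow> rA \<noteq> 0"
  proof (cases "f b0 \<in> sunits S")
    case True
    show ?thesis by (rule that[of "f b0" 0]) (use True zS in simp_all)
  next
    case False
    have "f b0 \<noteq> 0" using b0T unfolding supp_def by simp
    then obtain a r where "a \<in> sunits S" "r \<in> S" "r \<noteq> 0" "f b0 = a + r"
      using dec[OF af at fvS _ False] by blast
    then show ?thesis by (intro that[of a r]) simp_all
  qed
  have aBS: "aB \<in> S" "aB \<noteq> 0" using sunS[OF dB(1)] by auto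
  define p where "p = par b0 \<delta>"
  have pstep: "p (v + \<delta>) \<longleftrightarrow> \<not> p v" if "b0 \<le> v" for v
    unfolding p_def by (rule par_step[OF wo dpos that])
  have pbase: "p v" if "b0 \<le> v" "v < b1" for v
  proof -
    have "v < b0 + \<delta>" using that(2) b1eq by simp
    then show ?thesis unfolding p_def by (rule par_base[OF dpos that(1)])
  qed
  have pb1: "\<not> p b1" using pstep[of b0] pbase[of b0] b0b1 b1eq by simp
  have pb2: "p (b1 + \<delta>)" using pstep[of b1] pb1 b0b1 by simp
  define condA where "condA v \<longleftrightarrow> v = t0 \<or> v = t1 \<or> (v \<in> supp f \<and> t1 < v \<and> v < b1) \<or> (v \<in> supp f \<and> b1 < v \<and> p v)" for v
  define condB where "condB v \<longleftrightarrow> v = b1 \<or> (v \<in> supp f \<and> b1 < v \<and> \<not> p v)" for v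
  define A where "A = (\<lambda>v. if v = b0 then rA else if condA v then f v else 0)"
  define B where "B = (\<lambda>v. if v = b0 then aB else if condB v then f v else 0)"
  have excl: "condA x \<longleftrightarrow> \<not> condB x" if "x \<in> supp f" for x
  proof -
    have "x = t0 \<or> t1 \<le> x" using Tall that by blast
    moreover have "x < b1 \<or> x = b1 \<or> b1 < x" by auto
    ultimately show ?thesis unfolding condA_def condB_def using that t0t1 t1b1 t0b1
      by (auto simp: order_le_less)
  qed
  have sum: "f = (\<lambda>x. A x + B x)"
  proof
    fix x
    show "f x = A x + B x"
    proof (cases "x = b0")
      case True then show ?thesis unfolding A_def B_def using dB(3) by (simp add: add.commute)
    next
      case False
      show ?thesis
      proof (cases "x \<in> supp f")
        case True
        then show ?thesis unfolding A_def B_def using False excl[OF True] by auto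
      next
        case nx: False
        hence "f x = 0" unfolding supp_def by simp
        then show ?thesis unfolding A_def B_def using False by auto
      qed
    qed
  qed
  have suppA: "v \<in> supp f \<and> v \<noteq> b1 \<and> (v = t0 \<or> (t1 \<le> v \<and> v < b1) \<or> (b1 < v \<and> p v))"
    if "v \<in> supp A" for v
  proof (cases "v = b0")
    case True then show ?thesis using b0T t1b0 b0b1 by auto
  next
    case False
    hence cA: "condA v" "f v \<noteq> 0" using that unfolding A_def supp_def by (auto split: if_splits)
    hence vT: "v \<in> supp f" unfolding supp_def by simp
    show ?thesis using cA(1) vT t0b1 t1b1 unfolding condA_def by auto
  qed
  have suppB: "v \<in> supp f \<and> (v = b0 \<or> v = b1 \<or> (b1 < v \<and> \<not> p v))" if "v \<in> supp B" for v
  proof (cases "v = b0")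
    case True then show ?thesis using b0T by auto
  next
    case False
    hence cB: "condB v" "f v \<noteq> 0" using that unfolding B_def supp_def by (auto split: if_splits)
    hence vT: "v \<in> supp f" unfolding supp_def by simp
    show ?thesis using cB(1) vT unfolding condB_def by auto
  qed
  have AS: "A \<in> series S"
  proof (rule pser[OF fS])
    show "\<forall>v. A v \<in> S" unfolding A_def using dB(2) fvS zS by auto
    show "supp A \<subseteq> supp f" using suppA by blast
  qed
  have BS: "B \<in> series S"
  proof (rule pser[OF fS])
    show "\<forall>v. B v \<in> S" unfolding B_def using aBS fvS zS by auto
    show "supp B \<subseteq> supp f" using suppB by blast
  qed
  have At0: "A t0 = f t0" unfolding A_def condA_def using t0b0 by auto
  have At1: "A t1 = f t1" if "b0 \<noteq> t1" unfolding A_def condA_def using that by auto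
  have irrA: "series_irreducible S A"
  proof (rule crit[OF sd ar wo at_sub AS, of "if f t0 \<in> sunits S then t0 else t1" t0 t1])
    show "A (if f t0 \<in> sunits S then t0 else t1) \<in> sunits S"
    proof (cases "f t0 \<in> sunits S")
      case True then show ?thesis using At0 by simp
    next
      case False
      hence f1: "f t1 \<in> sunits S" using u by simp
      hence "b0 \<noteq> t1" using b0t1 by blast
      then show ?thesis using False At1 f1 by simp
    qed
    show "t0 < t1" by (rule T01)
    show "t0 \<in> supp A" using At0 T0 unfolding supp_def by simp
    show "t1 \<in> supp A"
    proof (cases "b0 = t1")
      case True
      hence "rA \<noteq> 0" using b0t1 dB(4) by simp
      then show ?thesis using True unfolding A_def supp_def by simp
    next
      case False then show ?thesis using At1 T1 unfolding supp_def by simp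
    qed
    show "\<forall>v\<in>supp A. v = t0 \<or> v = t1 \<or> t1 < v"
      using suppA Tall by (metis order_le_less)
    show "\<forall>v\<in>supp A. t1 < v \<longrightarrow> v + \<delta> \<notin> supp A"
    proof (intro ballI impI notI)
      fix v assume v: "v \<in> supp A" "t1 < v" "v + \<delta> \<in> supp A"
      have sv: "v \<in> supp f" "v \<noteq> b1" "v = t0 \<or> (t1 \<le> v \<and> v < b1) \<or> (b1 < v \<and> p v)" using suppA[OF v(1)] by auto
      have vt0: "v \<noteq> t0" using v(2) t0t1 by auto
      have vw: "v < v + \<delta>" using dpos by simp
      have wt0: "v + \<delta> \<noteq> t0" using vw v(2) t0t1 by (metis less_trans less_irrefl)
      have sw: "v + \<delta> \<in> supp f" "v + \<delta> \<noteq> b1" "v + \<delta> = t0 \<or> (t1 \<le> v + \<delta> \<and> v + \<delta> < b1) \<or> (b1 < v + \<delta> \<and> p (v + \<delta>))"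
        using suppA[OF v(3)] by auto
      have cv: "c < v" using ct(1) v(2) by simp
      show False
      proof (cases "v + \<delta> < b1")
        case True
        have "b1 \<le> v + \<delta>" by (rule minP) (use sw(1) sv(1) cv in simp_all)
        then show False using True by simp
      next
        case False
        hence w1: "b1 < v + \<delta>" "p (v + \<delta>)" using sw(2,3) wt0 by auto
        have "b0 < v" using w1(1) b1eq by simp
        hence b0v: "b0 \<le> v" by simp
        have "\<not> p v" using pstep[OF b0v] w1(2) by simp
        moreover have "p v"
        proof (cases "v < b1")
          case True then show ?thesis using pbase b0v by simp
        next
          case False then show ?thesis using sv(2,3) vt0 by auto
        qed
        ultimately show False by simp
      qed
    qed
    show "A t1 \<in> sunits S \<or> t1 + \<delta> \<notin> supp A"
    proof (cases "f t1 \<in> sunits S")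
      case True
      hence "b0 \<noteq> t1" using b0t1 by blast
      then show ?thesis using At1 True by simp
    next
      case False
      hence c0: "c = t0" using c by simp
      have "t1 + \<delta> \<notin> supp A"
      proof
        assume w: "t1 + \<delta> \<in> supp A"
        have sw: "t1 + \<delta> \<in> supp f" "t1 + \<delta> \<noteq> b1" using suppA[OF w] by auto
        have "b1 \<le> t1 + \<delta>" by (rule minP) (use sw(1) T1 c0 t0t1 in simp_all)
        moreover have "t1 + \<delta> \<le> b1" using t1b0 b1eq by simp
        ultimately show False using sw(2) by simp
      qed
      then show ?thesis by simp
    qed
  qed
  have irrB: "series_irreducible S B"
  proof (rule crit[OF sd ar wo at_sub BS, of b0 b0 b1])
    show "B b0 \<in> sunits S" unfolding B_def using dB(1) by simp
    show "b0 < b1" by (rule b0b1)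
    show "b0 \<in> supp B" unfolding B_def supp_def using aBS by simp
    show "b1 \<in> supp B" unfolding B_def supp_def condB_def using b0b1 b1T aBS unfolding supp_def by simp
    show "\<forall>v\<in>supp B. v = b0 \<or> v = b1 \<or> b1 < v" using suppB by blast
    show "\<forall>v\<in>supp B. b1 < v \<longrightarrow> v + (b1 - b0) \<notin> supp B"
      unfolding bd
    proof (intro ballI impI notI)
      fix v assume v: "v \<in> supp B" "b1 < v" "v + \<delta> \<in> supp B"
      have nv: "\<not> p v" using suppB[OF v(1)] v(2) b0b1 by auto
      have "v < v + \<delta>" using dpos by simp
      with v(2) have "b1 < v + \<delta>" by (rule less_trans)
      hence "\<not> p (v + \<delta>)" using suppB[OF v(3)] b0b1 by auto
      moreover have "b0 \<le> v" using v(2) b0b1 by simp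
      ultimately show False using pstep nv by blast
    qed
    show "B b1 \<in> sunits S \<or> b1 + (b1 - b0) \<notin> supp B"
      unfolding bd
    proof (rule disjI2, rule notI)
      assume w: "b1 + \<delta> \<in> supp B"
      have "b1 < b1 + \<delta>" using dpos by simp
      hence "\<not> p (b1 + \<delta>)" using suppB[OF w] b0b1 by auto
      then show False using pb2 by simp
    qed
  qed
  show ?thesis by (rule sami_two[OF irrA irrB sum])
qed

lemma dir12_main: "sum_at_most_irreducibles S 2 f"
proof (cases "f t0 \<notin> sunits S \<and> f t1 \<notin> sunits S")
  case True then show ?thesis using caseI by blast
next
  case False
  hence u: "f t0 \<in> sunits S \<or> f t1 \<in> sunits S" by blast
  define c where "c = (if f t1 \<in> sunits S then t1 else t0)"
  show ?thesis
  proof (cases "{v \<in> supp f. v - \<delta> \<in> supp f \<and> c < v - \<delta>} = {}")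
    case True then show ?thesis using caseII_empty[OF u c_def] by blast
  next
    case False then show ?thesis using caseII_ne[OF u c_def] by blast
  qed
qed

end



theorem theorem4p6:
  fixes S :: "'r::idom set"
  assumes "semidomain S"
    and "additively_reduced S"
    and "additively_furstenberg S"
    and "\<forall>A::'g::linordered_ab_group_add set. bdd_below A \<longrightarrow>
           (\<forall>B\<subseteq>A. B \<noteq> {} \<longrightarrow> (\<exists>m\<in>B. \<forall>x\<in>B. m \<le> x))"
    and "\<exists>g::'g. g \<noteq> 0"
  shows "(add_atoms S = sunits S \<longleftrightarrow>
            (\<forall>f::'g \<Rightarrow> 'r. f \<in> series S \<and> supp_gt_one f \<longrightarrow> sum_at_most_irreducibles S 3 f))
       \<and> ((\<forall>f::'g \<Rightarrow> 'r. f \<in> series S \<and> supp_gt_one f \<longrightarrow> sum_at_most_irreducibles S 3 f)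
            \<longleftrightarrow> (\<exists>n::nat. n > 2 \<and>
                  (\<forall>f::'g \<Rightarrow> 'r. f \<in> series S \<and> supp_gt_one f \<longrightarrow> sum_at_most_irreducibles S n f)))"
proof -
  have wo: "wog TYPE('g)" unfolding wog_def by (rule assms(4))
  have d12: "\<forall>f::'g \<Rightarrow> 'r. f \<in> series S \<and> supp_gt_one f \<longrightarrow> sum_at_most_irreducibles S 3 f"
    if at: "add_atoms S = sunits S"
  proof (intro allI impI)
    fix f :: "'g \<Rightarrow> 'r" assume fa: "f \<in> series S \<and> supp_gt_one f"
    then obtain x y where "x \<in> supp f" "y \<in> supp f" "x \<noteq> y" unfolding supp_gt_one_def by blast
    then obtain t0 t1 where t: "t0 \<in> supp f" "t1 \<in> supp f" "t0 < t1" "\<forall>v\<in>supp f. v = t0 \<or> t1 \<le> v"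
      using get_two[OF wo conjunct1[OF fa] \<open>x \<in> supp f\<close> \<open>y \<in> supp f\<close> \<open>x \<noteq> y\<close>] by blast
    have fS: "f \<in> series S" using fa by blast
    have cs: "constr S f t0 t1"
      by (rule constr.intro[OF assms(1,2,3) wo at fS t(1) t(2) t(3) t(4)])
    show "sum_at_most_irreducibles S 3 f" using constr.dir12_main[OF cs] by (rule sami_mono) simp
  qed
  have d31: "add_atoms S = sunits S"
    if "\<exists>n::nat. n > 2 \<and> (\<forall>f::'g \<Rightarrow> 'r. f \<in> series S \<and> supp_gt_one f \<longrightarrow> sum_at_most_irreducibles S n f)"
  proof -
    from that obtain n :: nat where nn: "n > 2 \<and> (\<forall>f::'g \<Rightarrow> 'r. f \<in> series S \<and> supp_gt_one f \<longrightarrow> sum_at_most_irreducibles S n f)" ..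
    have n1: "n \<ge> 1" using conjunct1[OF nn] by simp
    show ?thesis by (rule dir31[OF assms(1,2,3) wo assms(5) n1 conjunct2[OF nn]])
  qed
  have d23: "\<exists>n::nat. n > 2 \<and> (\<forall>f::'g \<Rightarrow> 'r. f \<in> series S \<and> supp_gt_one f \<longrightarrow> sum_at_most_irreducibles S n f)"
    if "\<forall>f::'g \<Rightarrow> 'r. f \<in> series S \<and> supp_gt_one f \<longrightarrow> sum_at_most_irreducibles S 3 f"
    using that by (intro exI[of _ 3]) simp
  show ?thesis
  proof (intro conjI iffI)
    assume "add_atoms S = sunits S"
    then show "\<forall>f::'g \<Rightarrow> 'r. f \<in> series S \<and> supp_gt_one f \<longrightarrow> sum_at_most_irreducibles S 3 f" by (rule d12)
  next
    assume "\<forall>f::'g \<Rightarrow> 'r. f \<in> series S \<and> supp_gt_one f \<longrightarrow> sum_at_most_irreducibles S 3 f"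
    then show "add_atoms S = sunits S" by (rule d31[OF d23])
  next
    assume "\<forall>f::'g \<Rightarrow> 'r. f \<in> series S \<and> supp_gt_one f \<longrightarrow> sum_at_most_irreducibles S 3 f"
    then show "\<exists>n::nat. n > 2 \<and> (\<forall>f::'g \<Rightarrow> 'r. f \<in> series S \<and> supp_gt_one f \<longrightarrow> sum_at_most_irreducibles S n f)" by (rule d23)
  next
    assume "\<exists>n::nat. n > 2 \<and> (\<forall>f::'g \<Rightarrow> 'r. f \<in> series S \<and> supp_gt_one f \<longrightarrow> sum_at_most_irreducibles S n f)"
    then show "\<forall>f::'g \<Rightarrow> 'r. f \<in> series S \<and> supp_gt_one f \<longrightarrow> sum_at_most_irreducibles S 3 f" by (rule d12[OF d31])
  qed
qed


end
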